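(* Let $A$ be a bounded convex subset of $\mathbb R^2$ with non-empty interior, let $k,\ell\in\mathbb N$, and assume that the scaled grid problem over $\mathbb Z[i]$ for $A$ and $\sqrt2^{\,k}\sqrt5^{\,\ell}$ has at least two distinct solutions. Then for all $j\ge 0$, the scaled grid problem over $\mathbb Z[i]$ for $A$ and $\sqrt2^{\,k}\sqrt5^{\,\ell+2j}$ has at least $5^j+1$ solutions.
   Context: $\mathbb Z[i]$ is identified with $\mathbb Z^2\subseteq\mathbb R^2$. For a nonzero real $r$, a solution of the scaled grid problem over $\mathbb Z[i]$ for $A$ and $r$ is a point of $(rA)\cap\mathbb Z[i]$, where $rA=\{rv: v\in A\}$. *)

theory Defs
  imports "HOL-Analysis.Analysis"
begin

definition gauss_ints :: "complex set" where
  "gauss_ints = {z. Re z \<in> \<int> \<and> Im z \<in> \<int>}"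

definition grid_solutions :: "complex set \<Rightarrow> real \<Rightarrow> complex set" where
  "grid_solutions A r = ((\<lambda>v. r *\<^sub>R v) ` A) \<inter> gauss_ints"

end

theory Submission
  imports Defs
begin

lemma finite_gauss_bounded:
  assumes "bounded S"
  shows "finite (S \<inter> gauss_ints)"
proof -
  obtain B where B: "\<And>z. z \<in> S \<Longrightarrow> norm z \<le> B"
    using assms bounded_iff by blast
  define N where "N = ceiling B"
  have "S \<inter> gauss_ints \<subseteq> (\<lambda>(m,n). Complex (of_int m) (of_int n)) ` ({-N..N} \<times> {-N..N})"
  proof
    fix z assume z: "z \<in> S \<inter> gauss_ints"
    then obtain m n where m: "Re z = of_int m" and n: "Im z = of_int n"
      unfolding gauss_ints_def by (auto elim!: Ints_cases)
    have "\<bar>Re z\<bar> \<le> B" "\<bar>Im z\<bar> \<le> B" using B z abs_Re_le_cmod abs_Im_le_cmod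
      by (meson IntD1 order_trans)+
    hence "\<bar>m\<bar> \<le> N" "\<bar>n\<bar> \<le> N" using m n unfolding N_def
      by (metis ceiling_mono ceiling_of_int of_int_abs)+
    moreover have "z = Complex (of_int m) (of_int n)" using m n complex_eq_iff by auto
    ultimately show "z \<in> (\<lambda>(m,n). Complex (of_int m) (of_int n)) ` ({-N..N} \<times> {-N..N})"
      by (auto intro!: image_eqI[where x="(m,n)"])
  qed
  thus ?thesis by (rule finite_subset) auto
qed

lemma two_elems:
  assumes "2 \<le> card S"
  obtains x y where "x \<in> S" "y \<in> S" "x \<noteq> y"
proof -
  have "\<not> card S \<le> Suc 0" using assms by auto
  then show ?thesis using that card_le_Suc0_iff_eq
    by (metis assms card.infinite not_numeral_le_zero)
qed

theorem proposition5p19: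
  fixes A :: "complex set" and k l :: nat
  assumes "bounded A" and "convex A" and "interior A \<noteq> {}"
    and "card (grid_solutions A (sqrt 2 ^ k * sqrt 5 ^ l)) \<ge> 2"
  shows "\<forall>j::nat. card (grid_solutions A (sqrt 2 ^ k * sqrt 5 ^ (l + 2 * j))) \<ge> 5 ^ j + 1"
proof
  fix j :: nat
  define r where "r = sqrt 2 ^ k * sqrt 5 ^ l"
  define N :: nat where "N = 5 ^ j"
  have Npos: "N > 0" unfolding N_def by simp
  have s: "sqrt 2 ^ k * sqrt 5 ^ (l + 2 * j) = real N * r"
    unfolding r_def N_def by (simp add: power_add power_mult)
  obtain p q where p: "p \<in> grid_solutions A r" and q: "q \<in> grid_solutions A r" and pq: "p \<noteq> q"
    using two_elems assms(4) unfolding r_def by blast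
  obtain a b where a: "a \<in> A" "p = r *\<^sub>R a" and b: "b \<in> A" "q = r *\<^sub>R b"
    using p q unfolding grid_solutions_def by auto
  have pG: "Re p \<in> \<int>" "Im p \<in> \<int>" and qG: "Re q \<in> \<int>" "Im q \<in> \<int>"
    using p q unfolding grid_solutions_def gauss_ints_def by auto
  define f where "f t = of_nat N * p + of_nat t * (q - p)" for t :: nat
  have sub: "f ` {0..N} \<subseteq> grid_solutions A (real N * r)"
  proof
    fix z assume "z \<in> f ` {0..N}"
    then obtain t where t: "t \<le> N" "z = f t" by auto
    define u where "u = real t / real N"
    have u: "0 \<le> u" "u \<le> 1" using t Npos unfolding u_def by auto
    have inA: "(1 - u) *\<^sub>R a + u *\<^sub>R b \<in> A" using convexD_alt[OF assms(2) a(1) b(1) u] .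
    have "(real N * r) *\<^sub>R ((1 - u) *\<^sub>R a + u *\<^sub>R b) = f t"
      unfolding f_def a(2) b(2) u_def using Npos
      by (simp add: scaleR_conv_of_real algebra_simps)
    hence img: "z \<in> (\<lambda>v. (real N * r) *\<^sub>R v) ` A" using inA t by (metis image_eqI)
    have "Re z \<in> \<int>" "Im z \<in> \<int>" using t pG qG unfolding f_def
      by (auto intro!: Ints_add Ints_mult Ints_diff)
    thus "z \<in> grid_solutions A (real N * r)"
      using img unfolding grid_solutions_def gauss_ints_def by auto
  qed
  have inj: "inj_on f {0..N}"
  proof (rule inj_onI)
    fix x y assume "f x = f y"
    hence "(of_nat x - of_nat y) * (q - p) = 0" unfolding f_def by (simp add: algebra_simps)
    thus "x = y" using pq by simp
  qed
  have fin: "finite (grid_solutions A (real N * r))"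
    unfolding grid_solutions_def by (rule finite_gauss_bounded[OF bounded_scaling[OF assms(1)]])
  have "card (f ` {0..N}) = N + 1" using card_image[OF inj] by simp
  hence "N + 1 \<le> card (grid_solutions A (real N * r))" using card_mono[OF fin sub] by simp
  thus "5 ^ j + 1 \<le> card (grid_solutions A (sqrt 2 ^ k * sqrt 5 ^ (l + 2 * j)))"
    using s unfolding N_def by simp
qed

end
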